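(* Let $p\ge7$ be a prime. Then the cycle $C_{2p}$ admits an optimal extended irregular dominating set.
   Context: $C_m$ is the cycle on $m$ vertices. In a finite simple graph $\Gamma=(V,E)$ with distance $d$, a vertex $v$ carrying a non-negative integer label $\ell$ dominates (covers) exactly the vertices $u$ with $d(u,v)=\ell$; a vertex labeled $0$ dominates only itself. For $k\ge0$, a $k$-extended irregular dominating set is a set $S\subseteq V$ of $k$ vertices with a labeling $\lambda:S\to\mathbb{Z}_{\ge0}$ with distinct labels, such that every vertex of $V$ is dominated by some vertex of $S$; it is assumed that some vertex of $S$ has label $0$. $\gamma_e(\Gamma)$ is the minimum cardinality of such a set; a $k$-extended irregular dominating set is optimal if $k=\gamma_e(\Gamma)$. *)

theory Defs
  imports "HOL-Computational_Algebra.Primes"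
begin

text \<open>A finite simple graph is given by a vertex set V and an edge relation E (set of ordered
pairs, symmetric and irreflexive). The distance d(u,v) is the length of a shortest walk.\<close>

definition gdist :: "('a \<times> 'a) set \<Rightarrow> 'a \<Rightarrow> 'a \<Rightarrow> nat" where
  "gdist E u v = (LEAST n. (u, v) \<in> E ^^ n)"

definition cycle_V :: "nat \<Rightarrow> nat set" where
  "cycle_V m = {0..<m}"

definition cycle_E :: "nat \<Rightarrow> (nat \<times> nat) set" where
  "cycle_E m = {(u, v). u < m \<and> v < m \<and> (v = (u + 1) mod m \<or> u = (v + 1) mod m)}"

definition dominates :: "('a \<times> 'a) set \<Rightarrow> 'a \<Rightarrow> nat \<Rightarrow> 'a \<Rightarrow> bool" where
  "dominates E v l u \<longleftrightarrow> gdist E u v = l"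

definition ext_irr_dom :: "'a set \<Rightarrow> ('a \<times> 'a) set \<Rightarrow> nat \<Rightarrow> 'a set \<Rightarrow> ('a \<Rightarrow> nat) \<Rightarrow> bool" where
  "ext_irr_dom V E k S lam \<longleftrightarrow>
     S \<subseteq> V \<and> finite S \<and> card S = k \<and> inj_on lam S \<and> (\<exists>v\<in>S. lam v = 0) \<and>
     (\<forall>u\<in>V. \<exists>v\<in>S. dominates E v (lam v) u)"

definition gamma_e :: "'a set \<Rightarrow> ('a \<times> 'a) set \<Rightarrow> nat" where
  "gamma_e V E = (LEAST k. \<exists>S lam. ext_irr_dom V E k S lam)"

definition optimal_ext_irr_dom :: "'a set \<Rightarrow> ('a \<times> 'a) set \<Rightarrow> 'a set \<Rightarrow> ('a \<Rightarrow> nat) \<Rightarrow> bool" where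
  "optimal_ext_irr_dom V E S lam \<longleftrightarrow> ext_irr_dom V E (gamma_e V E) S lam"

end

theory Submission
  imports Defs "HOL-Number_Theory.Number_Theory"
begin


definition cD :: "nat \<Rightarrow> nat \<Rightarrow> nat \<Rightarrow> nat \<Rightarrow> bool" where
  "cD n j u v \<longleftrightarrow> int n dvd (int v - int u - int j) \<or> int n dvd (int u - int v - int j)"

lemma cyc_edge_int:
  assumes "(w, v) \<in> cycle_E n"
  shows "int n dvd (int v - int w - 1) \<or> int n dvd (int w - int v - 1)"
proof -
  from assms have w: "w < n" and v: "v < n" and h: "v = (w + 1) mod n \<or> w = (v + 1) mod n"
    by (auto simp: cycle_E_def)
  have vv: "int v = int v mod int n" "int w = int w mod int n" using v w by simp_all
  show ?thesis
  proof (cases "v = (w + 1) mod n")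
    case True
    then have "int v = (int w + 1) mod int n" by (simp add: of_nat_mod ac_simps)
    then have "int v mod int n = (int w + 1) mod int n" using vv by simp
    then show ?thesis by (simp add: mod_eq_dvd_iff algebra_simps)
  next
    case False
    then have "w = (v + 1) mod n" using h by simp
    then have "int w = (int v + 1) mod int n" by (simp add: of_nat_mod ac_simps)
    then have "int w mod int n = (int v + 1) mod int n" using vv by simp
    then show ?thesis by (simp add: mod_eq_dvd_iff algebra_simps)
  qed
qed

lemma cyc_lower:
  assumes "(u, v) \<in> cycle_E n ^^ k"
  shows "\<exists>j\<le>k. cD n j u v"
  using assms
proof (induction k arbitrary: v)
  case 0
  then show ?case by (auto simp: cD_def)
next
  case (Suc k)
  from Suc.prems obtain w where uw: "(u, w) \<in> cycle_E n ^^ k" and wv: "(w, v) \<in> cycle_E n"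
    by (auto elim: relpow_Suc_E)
  from Suc.IH[OF uw] obtain j where j: "j \<le> k" "cD n j u w" by blast
  have e: "int n dvd (int v - int w - 1) \<or> int n dvd (int w - int v - 1)"
    using cyc_edge_int[OF wv] .
  show ?case
  proof (cases "j = 0")
    case True
    then have wu: "int n dvd (int w - int u)" using j(2) by (auto simp: cD_def dvd_diff_commute)
    have "cD n 1 u v"
      using e unfolding cD_def
    proof (elim disjE)
      assume "int n dvd int v - int w - 1"
      then have "int n dvd ((int v - int w - 1) + (int w - int u))" using wu by (rule dvd_add)
      then show "int n dvd int v - int u - int 1 \<or> int n dvd int u - int v - int 1" by (simp add: algebra_simps)
    next
      assume "int n dvd int w - int v - 1"
      then have "int n dvd ((int w - int v - 1) - (int w - int u))" using wu by (rule dvd_diff)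
      then show "int n dvd int v - int u - int 1 \<or> int n dvd int u - int v - int 1" by (simp add: algebra_simps)
    qed
    then show ?thesis by auto
  next
    case False
    have jj: "int (j - 1) = int j - 1" using False by simp
    have "cD n (j + 1) u v \<or> cD n (j - 1) u v"
      using j(2) e unfolding cD_def
    proof (elim disjE)
      assume a: "int n dvd (int w - int u - int j)" and b: "int n dvd (int v - int w - 1)"
      have "int n dvd ((int w - int u - int j) + (int v - int w - 1))" using a b by (rule dvd_add)
      then have "int n dvd int v - int u - int (j + 1)" by (simp add: algebra_simps)
      then show "(int n dvd int v - int u - int (j + 1) \<or> int n dvd int u - int v - int (j + 1)) \<or>
          int n dvd int v - int u - int (j - 1) \<or> int n dvd int u - int v - int (j - 1)" by blast
    next
      assume a: "int n dvd (int w - int u - int j)" and b: "int n dvd (int w - int v - 1)"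
      have "int n dvd ((int w - int u - int j) - (int w - int v - 1))" using a b by (rule dvd_diff)
      then have "int n dvd int v - int u - int (j - 1)" unfolding jj by (simp add: algebra_simps)
      then show "(int n dvd int v - int u - int (j + 1) \<or> int n dvd int u - int v - int (j + 1)) \<or>
          int n dvd int v - int u - int (j - 1) \<or> int n dvd int u - int v - int (j - 1)" by blast
    next
      assume a: "int n dvd (int u - int w - int j)" and b: "int n dvd (int v - int w - 1)"
      have "int n dvd ((int u - int w - int j) - (int v - int w - 1))" using a b by (rule dvd_diff)
      then have "int n dvd int u - int v - int (j - 1)" unfolding jj by (simp add: algebra_simps)
      then show "(int n dvd int v - int u - int (j + 1) \<or> int n dvd int u - int v - int (j + 1)) \<or>
          int n dvd int v - int u - int (j - 1) \<or> int n dvd int u - int v - int (j - 1)" by blast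
    next
      assume a: "int n dvd (int u - int w - int j)" and b: "int n dvd (int w - int v - 1)"
      have "int n dvd ((int u - int w - int j) + (int w - int v - 1))" using a b by (rule dvd_add)
      then have "int n dvd int u - int v - int (j + 1)" by (simp add: algebra_simps)
      then show "(int n dvd int v - int u - int (j + 1) \<or> int n dvd int u - int v - int (j + 1)) \<or>
          int n dvd int v - int u - int (j - 1) \<or> int n dvd int u - int v - int (j - 1)" by blast
    qed
    moreover have "j + 1 \<le> Suc k" "j - 1 \<le> Suc k" using j(1) by simp_all
    ultimately show ?thesis by blast
  qed
qed

lemma path_plus:
  assumes "u < n"
  shows "(u, (u + k) mod n) \<in> cycle_E n ^^ k"
proof (induction k)
  case 0
  then show ?case using assms by simp
next
  case (Suc k)
  have n: "n > 0" using assms by simp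
  have "((u + k) mod n, ((u + k) mod n + 1) mod n) \<in> cycle_E n"
    using n by (auto simp: cycle_E_def)
  moreover have "((u + k) mod n + 1) mod n = (u + Suc k) mod n" by (simp add: mod_Suc_eq)
  ultimately show ?case using Suc by (metis relpow_Suc_I)
qed

lemma path_minus:
  assumes "v < n"
  shows "((v + k) mod n, v) \<in> cycle_E n ^^ k"
proof (induction k)
  case 0
  then show ?case using assms by simp
next
  case (Suc k)
  have n: "n > 0" using assms by simp
  have "((v + k) mod n + 1) mod n = (v + Suc k) mod n" by (simp add: mod_Suc_eq)
  then have "((v + Suc k) mod n, (v + k) mod n) \<in> cycle_E n"
    using n by (auto simp: cycle_E_def)
  then show ?case using Suc by (metis relpow_Suc_I2)
qed

lemma cD_path:
  assumes "u < n" "v < n" "cD n l u v"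
  shows "(u, v) \<in> cycle_E n ^^ l"
proof -
  have n: "n > 0" using assms by simp
  have vv: "int v = int v mod int n" "int u = int u mod int n" using assms by simp_all
  show ?thesis
  proof (cases "int n dvd (int v - int u - int l)")
    case True
    then have "int v mod int n = (int u + int l) mod int n"
      by (simp add: mod_eq_dvd_iff algebra_simps)
    then have "int v = int ((u + l) mod n)" using vv by (simp add: of_nat_mod)
    then have "v = (u + l) mod n" by linarith
    then show ?thesis using path_plus[OF assms(1)] by simp
  next
    case False
    then have "int n dvd (int u - int v - int l)" using assms(3) by (simp add: cD_def)
    then have "int u mod int n = (int v + int l) mod int n"
      by (simp add: mod_eq_dvd_iff algebra_simps)
    then have "int u = int ((v + l) mod n)" using vv by (simp add: of_nat_mod)
    then have "u = (v + l) mod n" by linarith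
    then show ?thesis using path_minus[OF assms(2)] by simp
  qed
qed

lemma not_dvd_small: "0 < (x::int) \<Longrightarrow> x < m \<Longrightarrow> \<not> m dvd x"
  using zdvd_not_zless by blast

lemma gdist_cyc:
  assumes "u < n" "v < n" "2 * l \<le> n" "cD n l u v"
  shows "gdist (cycle_E n) u v = l"
  unfolding gdist_def
proof (rule Least_equality)
  show "(u, v) \<in> cycle_E n ^^ l" using cD_path assms by blast
next
  fix k assume "(u, v) \<in> cycle_E n ^^ k"
  then obtain j where j: "j \<le> k" "cD n j u v" using cyc_lower by blast
  show "l \<le> k"
  proof (rule ccontr)
    assume "\<not> l \<le> k"
    then have jl: "j < l" using j by simp
    have A: "int n dvd (int l - int j) \<or> int n dvd (int l + int j)"
      using j(2) assms(4) unfolding cD_def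
    proof (elim disjE)
      assume "int n dvd int v - int u - int j" "int n dvd int v - int u - int l"
      then have "int n dvd ((int v - int u - int j) - (int v - int u - int l))" by (rule dvd_diff)
      then show ?thesis by (simp add: algebra_simps)
    next
      assume "int n dvd int v - int u - int j" "int n dvd int u - int v - int l"
      then have "int n dvd ((int v - int u - int j) + (int u - int v - int l))"
        by (rule dvd_add)
      then have "int n dvd -((int v - int u - int j) + (int u - int v - int l))"
        by (simp only: dvd_minus_iff)
      moreover have "-((int v - int u - int j) + (int u - int v - int l)) = int l + int j" by simp
      ultimately show ?thesis by (simp add: ac_simps)
    next
      assume "int n dvd int u - int v - int j" "int n dvd int v - int u - int l"
      then have "int n dvd ((int u - int v - int j) + (int v - int u - int l))"
        by (rule dvd_add)
      then have "int n dvd -((int u - int v - int j) + (int v - int u - int l))"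
        by (simp only: dvd_minus_iff)
      moreover have "-((int u - int v - int j) + (int v - int u - int l)) = int l + int j" by simp
      ultimately show ?thesis by (simp add: ac_simps)
    next
      assume "int n dvd int u - int v - int j" "int n dvd int u - int v - int l"
      then have "int n dvd ((int u - int v - int j) - (int u - int v - int l))" by (rule dvd_diff)
      then show ?thesis by (simp add: algebra_simps)
    qed
    have "0 < int l - int j" "int l - int j < int n" "0 < int l + int j" "int l + int j < int n"
      using jl assms(3) by linarith+
    then show False using A not_dvd_small by blast
  qed
qed



lemma dvd_small_eq:
  fixes P x :: int
  assumes "P dvd x" "\<bar>x\<bar> < P"
  shows "x = 0"
proof (rule ccontr)
  assume "x \<noteq> 0"
  then have "\<bar>P\<bar> \<le> \<bar>x\<bar>" using assms(1) dvd_imp_le_int by blast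
  then show False using assms(2) by linarith
qed

lemma Leg_vals: "Legendre x P = -1 \<or> Legendre x P = 0 \<or> Legendre x P = 1"
  by (auto simp: Legendre_def)

lemma Leg_zero: "Legendre x P = 0 \<longleftrightarrow> P dvd x"
  by (auto simp: Legendre_def cong_0_iff)

lemma Leg_cong:
  assumes "P dvd (x - y)"
  shows "Legendre x P = Legendre y P"
proof -
  have c: "[x = y] (mod P)" using assms by (simp add: cong_iff_dvd_diff)
  have "[x = 0] (mod P) \<longleftrightarrow> [y = 0] (mod P)" using c cong_sym cong_trans by blast
  moreover have "QuadRes P x \<longleftrightarrow> QuadRes P y"
    unfolding QuadRes_def using c cong_sym cong_trans by blast
  ultimately show ?thesis by (simp add: Legendre_def)
qed

lemma Leg_mult:
  fixes p :: nat
  assumes "prime p" "2 < p"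
  shows "Legendre (x * y) (int p) = Legendre x (int p) * Legendre y (int p)"
proof -
  let ?h = "(p - 1) div 2"
  have a: "[Legendre (x*y) (int p) = (x*y) ^ ?h] (mod int p)" using euler_criterion assms by blast
  have b: "[Legendre x (int p) = x ^ ?h] (mod int p)" using euler_criterion assms by blast
  have c: "[Legendre y (int p) = y ^ ?h] (mod int p)" using euler_criterion assms by blast
  have "[Legendre x (int p) * Legendre y (int p) = x ^ ?h * y ^ ?h] (mod int p)"
    using b c by (rule cong_mult)
  then have "[Legendre (x*y) (int p) = Legendre x (int p) * Legendre y (int p)] (mod int p)"
    using a by (metis cong_sym cong_trans power_mult_distrib)
  then have d: "int p dvd (Legendre (x*y) (int p) - Legendre x (int p) * Legendre y (int p))"
    by (simp add: cong_iff_dvd_diff)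
  have "\<bar>Legendre (x*y) (int p) - Legendre x (int p) * Legendre y (int p)\<bar> \<le> 2"
    using Leg_vals[of "x*y" "int p"] Leg_vals[of x "int p"] Leg_vals[of y "int p"]
    by (elim disjE) simp_all
  then have "\<bar>Legendre (x*y) (int p) - Legendre x (int p) * Legendre y (int p)\<bar> < int p"
    using assms(2) by linarith
  then show ?thesis using dvd_small_eq[OF d] by simp
qed

lemma NR_exists:
  fixes p :: nat
  assumes "prime p" "2 < p"
  shows "\<exists>m. Legendre m (int p) = -1"
proof -
  define A where "A = {1..p-1}"
  define f where "f x = (x * x) mod p" for x :: nat
  have pd: "\<And>x. x \<in> A \<Longrightarrow> \<not> p dvd x" unfolding A_def
    by (auto dest: dvd_imp_le)
  have fA: "f ` A \<subseteq> A"
  proof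
    fix y assume "y \<in> f ` A"
    then obtain x where x: "x \<in> A" "y = f x" by auto
    have "\<not> p dvd x * x" using pd[OF x(1)] assms(1) prime_dvd_mult_iff by blast
    then have "y \<noteq> 0" using x(2) unfolding f_def by (simp add: dvd_eq_mod_eq_0)
    moreover have "y < p" using x(2) f_def assms by simp
    ultimately show "y \<in> A" unfolding A_def by auto
  qed
  have ninj: "\<not> inj_on f A"
  proof
    assume inj: "inj_on f A"
    have "1 \<in> A" "p - 1 \<in> A" using assms unfolding A_def by auto
    moreover have "f 1 = f (p - 1)"
    proof -
      have h: "int (p - 1) = int p - 1" using assms by simp
      have "int ((p - 1) * (p - 1)) = (int p - 1) * (int p - 1)" by (simp only: of_nat_mult h)
      also have "\<dots> = int p * (int p - 2) + 1" by (simp add: algebra_simps)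
      finally have "int ((p - 1) * (p - 1)) = int p * (int p - 2) + 1" .
      then have "int ((p - 1) * (p - 1)) mod int p = 1 mod int p" by simp
      then have "((p - 1) * (p - 1)) mod p = 1 mod p" by (metis of_nat_1 of_nat_mod of_nat_eq_iff)
      then show ?thesis unfolding f_def by simp
    qed
    ultimately have "1 = p - 1" using inj by (meson inj_onD)
    then show False using assms by simp
  qed
  have "f ` A \<noteq> A"
  proof
    assume "f ` A = A"
    then have "card (f ` A) = card A" by simp
    then have "inj_on f A" using eq_card_imp_inj_on unfolding A_def by (metis finite_atLeastAtMost)
    then show False using ninj by simp
  qed
  then obtain y where y: "y \<in> A" "y \<notin> f ` A" using fA by blast
  have "Legendre (int y) (int p) = -1"
  proof -
    have n0: "\<not> [int y = 0] (mod int p)" using pd[OF y(1)]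
      by (simp add: cong_0_iff)
    have "\<not> QuadRes (int p) (int y)"
    proof
      assume "QuadRes (int p) (int y)"
      then obtain z where z: "[z^2 = int y] (mod int p)" unfolding QuadRes_def by blast
      define x where "x = nat (z mod int p)"
      have xz: "int x = z mod int p" unfolding x_def using assms by simp
      have "[int x = z] (mod int p)" unfolding xz by (simp add: cong_def)
      then have "[int x * int x = z^2] (mod int p)" by (metis cong_mult power2_eq_square)
      then have c: "[int x * int x = int y] (mod int p)" using z cong_trans by blast
      have "x \<noteq> 0"
      proof
        assume "x = 0"
        then have "[0 = int y] (mod int p)" using c by simp
        then show False using n0 cong_sym by blast
      qed
      moreover have "x < p"
      proof -
        have "z mod int p < int p" using assms by simp
        then show ?thesis using xz by linarith
      qed
      ultimately have xA: "x \<in> A" unfolding A_def by auto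
      have "int ((x * x) mod p) = (int x * int x) mod int p" by (simp add: of_nat_mod)
      also have "\<dots> = int y mod int p" using c by (simp add: cong_def)
      also have "\<dots> = int y" using y(1) unfolding A_def by auto
      finally have "f x = y" unfolding f_def by simp
      then show False using xA y(2) by blast
    qed
    then show ?thesis using n0 by (simp add: Legendre_def)
  qed
  then show ?thesis by blast
qed



definition vert :: "nat \<Rightarrow> nat \<Rightarrow> int \<Rightarrow> nat" where
  "vert p e r = (if nat (r mod int p) mod 2 = e then nat (r mod int p) else nat (r mod int p) + p)"

lemma vert_props:
  assumes "odd p" "e \<le> 1"
  shows "vert p e r < 2 * p \<and> vert p e r mod 2 = e \<and> int p dvd (int (vert p e r) - r)"
proof -
  have p0: "p > 0" using assms(1) by (cases p) auto
  define q where "q = nat (r mod int p)"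
  have q: "int q = r mod int p" unfolding q_def using p0 by simp
  have qp: "q < p" using q p0
    by (metis of_nat_0_less_iff of_nat_less_iff pos_mod_bound)
  have d: "int p dvd (int q - r)" unfolding q by (simp add: mod_eq_dvd_iff[symmetric])
  show ?thesis
  proof (cases "q mod 2 = e")
    case True
    then show ?thesis using qp d unfolding vert_def q_def[symmetric] by simp
  next
    case False
    have "(q + p) mod 2 = e" using False assms by presburger
    moreover have "int p dvd (int (q + p) - r)"
    proof -
      have "int (q + p) - r = (int q - r) + int p" by simp
      have "int p dvd ((int q - r) + int p)" by (rule dvd_add[OF d dvd_refl])
      then show ?thesis unfolding \<open>int (q + p) - r = (int q - r) + int p\<close> .
    qed
    ultimately show ?thesis using False qp unfolding vert_def q_def[symmetric] by simp
  qed
qed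

definition C0 :: "nat \<Rightarrow> int \<Rightarrow> nat \<Rightarrow> bool" where
  "C0 p a l \<longleftrightarrow> Legendre (a * int l) (int p) = 1"

definition par :: "nat \<Rightarrow> int \<Rightarrow> nat \<Rightarrow> nat" where
  "par p a l = (if l = 0 \<or> l = p then (if C0 p a (p - 1) then 1 else 0)
     else if C0 p a l then l mod 2 else (l + 1) mod 2)"

definition res :: "nat \<Rightarrow> int \<Rightarrow> nat \<Rightarrow> int" where
  "res p a l = (if l = 0 then (if C0 p a (p - 1) then -(a - 1) else 0)
     else if l = p then (if C0 p a (p - 1) then 0 else -(a - 1))
     else if C0 p a l then (a - 1) * int l else -(a - 1) * (int l + 1))"

definition cen :: "nat \<Rightarrow> int \<Rightarrow> nat \<Rightarrow> nat" where
  "cen p a l = vert p (par p a l) (res p a l)"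

lemma par_le: "par p a l \<le> 1"
  unfolding par_def by auto

lemma cen_props:
  assumes "odd p"
  shows "cen p a l < 2 * p \<and> cen p a l mod 2 = par p a l \<and> int p dvd (int (cen p a l) - res p a l)"
  unfolding cen_def using vert_props[OF assms par_le] .

lemma cover_crit:
  assumes "odd p" "prime p" "even (par p a l + l + u)"
    and "int p dvd (res p a l - int u - int l) \<or> int p dvd (int u - res p a l - int l)"
  shows "cD (2 * p) l u (cen p a l)"
proof -
  let ?c = "cen p a l"
  have cp: "?c mod 2 = par p a l" "int p dvd (int ?c - res p a l)" using cen_props[OF assms(1)] by auto
  have ev: "even (?c + l + u)" using cp(1) assms(3) by presburger
  have e1: "(2::int) dvd (int ?c - int u - int l)" "(2::int) dvd (int u - int ?c - int l)"
    using ev by presburger+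
  have cop: "coprime (2::int) (int p)" using assms(1) by (simp add: coprime_left_2_iff_odd)
  from assms(4) show ?thesis
  proof
    assume h: "int p dvd (res p a l - int u - int l)"
    have "int p dvd ((int ?c - res p a l) + (res p a l - int u - int l))"
      using cp(2) h by (rule dvd_add)
    then have "int p dvd (int ?c - int u - int l)" by (simp add: algebra_simps)
    then have "2 * int p dvd (int ?c - int u - int l)" using e1(1) cop divides_mult by blast
    then show ?thesis unfolding cD_def by simp
  next
    assume h: "int p dvd (int u - res p a l - int l)"
    have "int p dvd ((int u - res p a l - int l) - (int ?c - res p a l))"
      using h cp(2) by (rule dvd_diff)
    then have "int p dvd (int u - int ?c - int l)" by (simp add: algebra_simps)
    then have "2 * int p dvd (int u - int ?c - int l)" using e1(2) cop divides_mult by blast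
    then show ?thesis unfolding cD_def by simp
  qed
qed

lemma solve_lin:
  fixes p :: nat and c z :: int
  assumes "prime p" "\<not> int p dvd c" "\<not> int p dvd z"
  shows "\<exists>l. 1 \<le> l \<and> l \<le> p - 1 \<and> int p dvd (c * int l - z)"
proof -
  have pp: "prime (int p)" using assms(1) by simp
  have p0: "p > 0" using assms(1) prime_gt_0_nat by blast
  have "coprime c (int p)" using prime_imp_coprime_int[OF pp assms(2)] by (simp add: ac_simps)
  then obtain x where x: "[c * x = 1] (mod int p)" using cong_solve_coprime_int by blast
  define l where "l = nat ((z * x) mod int p)"
  have li: "int l = (z * x) mod int p" unfolding l_def using p0 by simp
  have lp: "l < p" using li p0 by (metis of_nat_0_less_iff of_nat_less_iff pos_mod_bound)
  have d1: "int p dvd (int l - z * x)" unfolding li by (simp add: mod_eq_dvd_iff[symmetric])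
  have d2: "int p dvd (c * x - 1)" using x by (simp add: cong_iff_dvd_diff)
  have "c * int l - z = c * (int l - z * x) + z * (c * x - 1)" by (simp add: algebra_simps)
  moreover have "int p dvd (c * (int l - z * x) + z * (c * x - 1))"
    using d1 d2 by (simp add: dvd_add)
  ultimately have d: "int p dvd (c * int l - z)" by simp
  have "l \<noteq> 0"
  proof
    assume "l = 0"
    then have "int p dvd (- z)" using d by simp
    then show False using assms(3) by simp
  qed
  then show ?thesis using lp d by (intro exI[of _ l]) auto
qed



context
  fixes p :: nat and a m :: int
  assumes pr: "prime p" and p7: "7 \<le> p"
    and La: "\<not> int p dvd a" and La1: "\<not> int p dvd (a - 1)"
    and Lm: "Legendre m (int p) = -1" and am: "int p dvd (a - 2 - m * a)"
begin

lemma oddp: "odd p"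
  using pr p7 prime_odd_nat by simp

lemma p2: "2 < p" using p7 by simp

lemma ppr: "prime (int p)" using pr by simp

lemma cancel_a1:
  assumes "int p dvd ((a - 1) * x)"
  shows "int p dvd x"
  using assms La1 ppr prime_dvd_mult_iff by blast

lemma reg_ndvd:
  assumes "1 \<le> l" "l \<le> p - 1"
  shows "\<not> int p dvd int l"
proof
  assume "int p dvd int l"
  then have "p dvd l" by simp
  then show False using assms by (auto dest: dvd_imp_le)
qed

lemma reg_eq:
  assumes "1 \<le> l1" "l1 \<le> p - 1" "1 \<le> l2" "l2 \<le> p - 1" "int p dvd (int l1 - int l2)"
  shows "l1 = l2"
proof -
  have "\<bar>int l1 - int l2\<bar> < int p" using assms by linarith
  then have "int l1 - int l2 = 0" using dvd_small_eq assms(5) by blast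
  then show ?thesis by simp
qed

lemma reg_last:
  assumes "1 \<le> l" "l \<le> p - 1" "int p dvd (int l + 1)"
  shows "l = p - 1"
proof -
  have "int p dvd (int l - int (p - 1))"
  proof -
    have eq: "int l - int (p - 1) = (int l + 1) - int p" using p7 by simp
    have "int p dvd ((int l + 1) - int p)" by (rule dvd_diff[OF assms(3) dvd_refl])
    then show ?thesis unfolding eq .
  qed
  then show ?thesis using reg_eq[OF assms(1,2)] p7 by simp
qed

lemma reg_sum:
  assumes "1 \<le> l1" "l1 \<le> p - 1" "1 \<le> l2" "l2 \<le> p - 1" "int p dvd (int l1 + int l2 + 1)"
  shows "l1 + l2 + 1 = p"
proof -
  obtain k where k: "int l1 + int l2 + 1 = int p * k" using assms(5) by blast
  have "0 < int p * k" "int p * k < int p * 2" using k assms p7 by linarith+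
  then have "0 < k" "k < 2" using p7 by (simp_all add: zero_less_mult_iff mult_less_cancel_left_pos)
  then have "k = 1" by simp
  then have "int (l1 + l2 + 1) = int p" using k by simp
  then show ?thesis by (simp only: of_nat_eq_iff)
qed

lemma res_reg:
  assumes "1 \<le> l" "l \<le> p - 1"
  shows "res p a l = (if C0 p a l then (a - 1) * int l else -(a - 1) * (int l + 1))"
    and "par p a l = (if C0 p a l then l mod 2 else (l + 1) mod 2)"
  using assms p7 unfolding res_def par_def by auto

lemma dvd_a1:
  assumes "int p dvd E" "E = (a - 1) * X \<or> E = - ((a - 1) * X)"
  shows "int p dvd X"
proof -
  have "int p dvd ((a - 1) * X)" using assms by (auto simp: dvd_minus_iff)
  then show ?thesis using cancel_a1 by blast
qed

lemma res0: "res p a 0 = (if C0 p a (p - 1) then -(a - 1) else 0)" "par p a 0 = (if C0 p a (p - 1) then 1 else 0)"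
  unfolding res_def par_def by auto

lemma resp: "res p a p = (if C0 p a (p - 1) then 0 else -(a - 1))" "par p a p = (if C0 p a (p - 1) then 1 else 0)"
  using p7 unfolding res_def par_def by auto

lemma pm1_even: "(p - 1) mod 2 = 0" "p mod 2 = 1" using oddp by presburger+

lemma inj_aux:
  assumes "l1 < l2" "l2 \<le> p" "par p a l1 = par p a l2" "int p dvd (res p a l1 - res p a l2)"
  shows False
proof (cases "l1 = 0")
  case l10: True
  show False
  proof (cases "l2 = p")
    case True
    have "int p dvd 1"
    proof (rule dvd_a1[OF assms(4)])
      show "res p a l1 - res p a l2 = (a - 1) * 1 \<or> res p a l1 - res p a l2 = - ((a - 1) * 1)"
        using l10 True res0 resp by auto
    qed
    then show False using p7 by simp
  next
    case False
    then have r: "1 \<le> l2" "l2 \<le> p - 1" using assms(1,2) by auto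
    note rr = res_reg[OF r]
    show False
    proof (cases "C0 p a (p - 1)")
      case cB: True
      show False
      proof (cases "C0 p a l2")
        case True
        have "int p dvd (int l2 + 1)"
          by (rule dvd_a1[OF assms(4)]) (use l10 cB True rr res0 in \<open>auto simp: algebra_simps\<close>)
        then have "l2 = p - 1" using reg_last r by blast
        then show False using assms(3) l10 cB True rr res0 pm1_even by auto
      next
        case False
        have "int p dvd int l2"
          by (rule dvd_a1[OF assms(4)]) (use l10 cB False rr res0 in \<open>auto simp: algebra_simps\<close>)
        then show False using reg_ndvd r by blast
      qed
    next
      case cA: False
      show False
      proof (cases "C0 p a l2")
        case True
        have "int p dvd int l2"
          by (rule dvd_a1[OF assms(4)]) (use l10 cA True rr res0 in \<open>auto simp: algebra_simps\<close>)
        then show False using reg_ndvd r by blast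
      next
        case False
        have "int p dvd (int l2 + 1)"
          by (rule dvd_a1[OF assms(4)]) (use l10 cA False rr res0 in \<open>auto simp: algebra_simps\<close>)
        then have "l2 = p - 1" using reg_last r by blast
        then show False using assms(3) l10 cA False rr res0 pm1_even p7 by auto
      qed
    qed
  qed
next
  case l1n0: False
  then have r1: "1 \<le> l1" "l1 \<le> p - 1" using assms(1,2) by auto
  note rr1 = res_reg[OF r1]
  show False
  proof (cases "l2 = p")
    case l2p: True
    show False
    proof (cases "C0 p a (p - 1)")
      case cB: True
      show False
      proof (cases "C0 p a l1")
        case True
        have "int p dvd int l1"
          by (rule dvd_a1[OF assms(4)]) (use l2p cB True rr1 resp in \<open>auto simp: algebra_simps\<close>)
        then show False using reg_ndvd r1 by blast
      next
        case False
        have "int p dvd (int l1 + 1)"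
          by (rule dvd_a1[OF assms(4)]) (use l2p cB False rr1 resp in \<open>auto simp: algebra_simps\<close>)
        then have "l1 = p - 1" using reg_last r1 by blast
        then show False using cB False by simp
      qed
    next
      case cA: False
      show False
      proof (cases "C0 p a l1")
        case True
        have "int p dvd (int l1 + 1)"
          by (rule dvd_a1[OF assms(4)]) (use l2p cA True rr1 resp in \<open>auto simp: algebra_simps\<close>)
        then have "l1 = p - 1" using reg_last r1 by blast
        then show False using cA True by simp
      next
        case False
        have "int p dvd int l1"
          by (rule dvd_a1[OF assms(4)]) (use l2p cA False rr1 resp in \<open>auto simp: algebra_simps\<close>)
        then show False using reg_ndvd r1 by blast
      qed
    qed
  next
    case False
    then have r2: "1 \<le> l2" "l2 \<le> p - 1" using assms(1,2) by auto
    note rr2 = res_reg[OF r2]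
    show False
    proof (cases "C0 p a l1")
      case c1: True
      show False
      proof (cases "C0 p a l2")
        case True
        have "int p dvd (int l1 - int l2)"
          by (rule dvd_a1[OF assms(4)]) (use c1 True rr1 rr2 in \<open>auto simp: algebra_simps\<close>)
        then show False using reg_eq[OF r1 r2] assms(1) by simp
      next
        case False
        have "int p dvd (int l1 + int l2 + 1)"
          by (rule dvd_a1[OF assms(4)]) (use c1 False rr1 rr2 in \<open>auto simp: algebra_simps\<close>)
        then have s: "l1 + l2 + 1 = p" using reg_sum[OF r1 r2] by blast
        have "l1 mod 2 = (l2 + 1) mod 2" using assms(3) c1 False rr1 rr2 by simp
        then show False using s oddp by presburger
      qed
    next
      case c1: False
      show False
      proof (cases "C0 p a l2")
        case True
        have "int p dvd (int l1 + int l2 + 1)"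
          by (rule dvd_a1[OF assms(4)]) (use c1 True rr1 rr2 in \<open>auto simp: algebra_simps\<close>)
        then have s: "l1 + l2 + 1 = p" using reg_sum[OF r1 r2] by blast
        have "(l1 + 1) mod 2 = l2 mod 2" using assms(3) c1 True rr1 rr2 by simp
        then show False using s oddp by presburger
      next
        case False
        have "int p dvd (int l1 - int l2)"
          by (rule dvd_a1[OF assms(4)]) (use c1 False rr1 rr2 in \<open>auto simp: algebra_simps\<close>)
        then show False using reg_eq[OF r1 r2] assms(1) by simp
      qed
    qed
  qed
qed

lemma cen_inj: "inj_on (cen p a) {0..p}"
proof (rule inj_onI)
  fix l1 l2 assume l: "l1 \<in> {0..p}" "l2 \<in> {0..p}" and e: "cen p a l1 = cen p a l2"
  have c1: "cen p a l1 mod 2 = par p a l1" "int p dvd (int (cen p a l1) - res p a l1)"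
    using cen_props[OF oddp] by auto
  have c2: "cen p a l2 mod 2 = par p a l2" "int p dvd (int (cen p a l2) - res p a l2)"
    using cen_props[OF oddp] by auto
  have pe: "par p a l1 = par p a l2" using c1 c2 e by simp
  have "int p dvd ((int (cen p a l2) - res p a l2) - (int (cen p a l1) - res p a l1))"
    using c1(2) c2(2) by (simp add: dvd_diff)
  then have d: "int p dvd (res p a l1 - res p a l2)" using e by (simp add: algebra_simps)
  have d': "int p dvd (res p a l2 - res p a l1)"
    using d by (simp add: dvd_diff_commute)
  show "l1 = l2"
  proof (rule ccontr)
    assume "l1 \<noteq> l2"
    then have "l1 < l2 \<or> l2 < l1" by auto
    then show False
    proof
      assume "l1 < l2" then show False using inj_aux l pe d by auto
    next
      assume "l2 < l1" then show False using inj_aux[of l2 l1] l pe d' by auto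
    qed
  qed
qed

lemma Lmult: "Legendre (x * y) (int p) = Legendre x (int p) * Legendre y (int p)"
  using Leg_mult[OF pr p2] .

lemma Lm_nd: "\<not> int p dvd m" using Lm Leg_zero[of m "int p"] by auto

lemma Lnz: "\<not> int p dvd x \<Longrightarrow> Legendre x (int p) = 1 \<or> Legendre x (int p) = -1"
  using Leg_vals[of x "int p"] Leg_zero[of x "int p"] by auto

lemma cover:
  assumes "u < 2 * p"
  shows "\<exists>l\<le>p. cD (2 * p) l u (cen p a l)"
proof -
  let ?r = "int u"
  have crit: "\<And>l. l \<le> p \<Longrightarrow> even (par p a l + l + u) \<Longrightarrow>
      int p dvd (res p a l - int u - int l) \<or> int p dvd (int u - res p a l - int l) \<Longrightarrow>
      \<exists>l\<le>p. cD (2 * p) l u (cen p a l)"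
    using cover_crit[OF oddp pr] by blast
  show ?thesis
  proof (cases "even u")
    case ue: True
    show ?thesis
    proof (cases "int p dvd ?r")
      case True
      show ?thesis
      proof (cases "C0 p a (p - 1)")
        case cB: True
        show ?thesis
        proof (rule crit[of p])
          show "even (par p a p + p + u)" using cB resp ue oddp by simp
          have "res p a p - int u - int p = - (?r + int p)" using cB resp by simp
          moreover have "int p dvd (?r + int p)" using True by simp
          ultimately have "int p dvd (res p a p - int u - int p)" by (simp only: dvd_minus_iff)
          then show "int p dvd (res p a p - int u - int p) \<or> int p dvd (int u - res p a p - int p)"
            by blast
        qed simp
      next
        case cA: False
        show ?thesis
        proof (rule crit[of 0])
          show "even (par p a 0 + 0 + u)" using cA res0 ue by simp
          show "int p dvd (res p a 0 - int u - int 0) \<or> int p dvd (int u - res p a 0 - int 0)"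
            using cA res0 True by simp
        qed simp
      qed
    next
      case nd: False
      show ?thesis
      proof (cases "Legendre ?r (int p) = 1")
        case True
        obtain l where l: "1 \<le> l" "l \<le> p - 1" "int p dvd (a * int l - ?r)"
          using solve_lin[OF pr La nd] by blast
        have "Legendre (a * int l) (int p) = Legendre ?r (int p)" using Leg_cong l(3) by blast
        then have c: "C0 p a l" using True unfolding C0_def by simp
        note rr = res_reg[OF l(1,2)]
        show ?thesis
        proof (rule crit[of l])
          show "l \<le> p" using l by simp
          show "even (par p a l + l + u)" using c rr ue by presburger
          have eq: "int u - res p a l - int l = - (a * int l - ?r)" using c rr by (simp add: algebra_simps)
          have "int p dvd (- (a * int l - ?r))" using l(3) by (simp only: dvd_minus_iff)
          then have "int p dvd (int u - res p a l - int l)" by (simp only: eq)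
          then show "int p dvd (res p a l - int u - int l) \<or> int p dvd (int u - res p a l - int l)"
            by blast
        qed
      next
        case False
        then have Lr: "Legendre ?r (int p) = -1" using Lnz nd by blast
        obtain y where y: "1 \<le> y" "y \<le> p - 1" "int p dvd (m * int y - ?r)"
          using solve_lin[OF pr Lm_nd nd] by blast
        have "Legendre (m * int y) (int p) = Legendre ?r (int p)" using Leg_cong y(3) by blast
        then have Ly: "Legendre (int y) (int p) = 1" using Lr Lm Lmult by simp
        have ynd: "\<not> int p dvd int y" using reg_ndvd y by blast
        obtain l where l: "1 \<le> l" "l \<le> p - 1" "int p dvd (a * int l - int y)"
          using solve_lin[OF pr La ynd] by blast
        have "Legendre (a * int l) (int p) = Legendre (int y) (int p)" using Leg_cong l(3) by blast
        then have c: "C0 p a l" using Ly unfolding C0_def by simp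
        note rr = res_reg[OF l(1,2)]
        show ?thesis
        proof (rule crit[of l])
          show "l \<le> p" using l by simp
          show "even (par p a l + l + u)" using c rr ue by presburger
          have "res p a l - int u - int l = (a - 2 - m * a) * int l + m * (a * int l - int y) + (m * int y - ?r)"
            using c rr by (simp add: algebra_simps)
          moreover have "int p dvd ((a - 2 - m * a) * int l + m * (a * int l - int y) + (m * int y - ?r))"
            using am l(3) y(3) by (simp add: dvd_add)
          ultimately have "int p dvd (res p a l - int u - int l)" by (simp only:)
          then show "int p dvd (res p a l - int u - int l) \<or> int p dvd (int u - res p a l - int l)"
            by blast
        qed
      qed
    qed
  next
    case uo: False
    show ?thesis
    proof (cases "int p dvd (?r + (a - 1))")
      case True
      show ?thesis
      proof (cases "C0 p a (p - 1)")
        case cB: True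
        show ?thesis
        proof (rule crit[of 0])
          show "even (par p a 0 + 0 + u)" using cB res0 uo by simp
          have eq: "res p a 0 - int u - int 0 = - (?r + (a - 1))" using cB res0 by simp
          have "int p dvd (- (?r + (a - 1)))" using True by (simp only: dvd_minus_iff)
          then have "int p dvd (res p a 0 - int u - int 0)" by (simp only: eq)
          then show "int p dvd (res p a 0 - int u - int 0) \<or> int p dvd (int u - res p a 0 - int 0)"
            by blast
        qed simp
      next
        case cA: False
        show ?thesis
        proof (rule crit[of p])
          show "even (par p a p + p + u)" using cA resp uo oddp by simp
          have "res p a p - int u - int p = - ((?r + (a - 1)) + int p)" using cA resp by simp
          moreover have "int p dvd ((?r + (a - 1)) + int p)" using True by simp
          ultimately have "int p dvd (res p a p - int u - int p)" by (simp only: dvd_minus_iff)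
          then show "int p dvd (res p a p - int u - int p) \<or> int p dvd (int u - res p a p - int p)"
            by blast
        qed simp
      qed
    next
      case nd0: False
      define y where "y = - (?r + (a - 1))"
      have nd: "\<not> int p dvd y" unfolding y_def dvd_minus_iff using nd0 .
      show ?thesis
      proof (cases "Legendre y (int p) = -1")
        case True
        obtain l where l: "1 \<le> l" "l \<le> p - 1" "int p dvd (a * int l - y)"
          using solve_lin[OF pr La nd] by blast
        have "Legendre (a * int l) (int p) = Legendre y (int p)" using Leg_cong l(3) by blast
        then have c: "\<not> C0 p a l" using True unfolding C0_def by simp
        note rr = res_reg[OF l(1,2)]
        show ?thesis
        proof (rule crit[of l])
          show "l \<le> p" using l by simp
          show "even (par p a l + l + u)" using c rr uo by presburger
          have eq: "res p a l - int u - int l = - (a * int l - y)"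
            using c rr unfolding y_def by (simp add: algebra_simps)
          have "int p dvd (- (a * int l - y))" using l(3) by (simp only: dvd_minus_iff)
          then have "int p dvd (res p a l - int u - int l)" by (simp only: eq)
          then show "int p dvd (res p a l - int u - int l) \<or> int p dvd (int u - res p a l - int l)"
            by blast
        qed
      next
        case False
        then have Ly: "Legendre y (int p) = 1" using Lnz nd by blast
        obtain y' where y': "1 \<le> y'" "y' \<le> p - 1" "int p dvd (m * int y' - y)"
          using solve_lin[OF pr Lm_nd nd] by blast
        have "Legendre (m * int y') (int p) = Legendre y (int p)" using Leg_cong y'(3) by blast
        then have Ly': "Legendre (int y') (int p) = -1" using Ly Lm Lmult by simp
        have ynd: "\<not> int p dvd int y'" using reg_ndvd y' by blast
        obtain l where l: "1 \<le> l" "l \<le> p - 1" "int p dvd (a * int l - int y')"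
          using solve_lin[OF pr La ynd] by blast
        have "Legendre (a * int l) (int p) = Legendre (int y') (int p)" using Leg_cong l(3) by blast
        then have c: "\<not> C0 p a l" using Ly' unfolding C0_def by simp
        note rr = res_reg[OF l(1,2)]
        show ?thesis
        proof (rule crit[of l])
          show "l \<le> p" using l by simp
          show "even (par p a l + l + u)" using c rr uo by presburger
          have "int u - res p a l - int l = (a - 2 - m * a) * int l + m * (a * int l - int y') + (m * int y' - y)"
            using c rr unfolding y_def by (simp add: algebra_simps)
          moreover have "int p dvd ((a - 2 - m * a) * int l + m * (a * int l - int y') + (m * int y' - y))"
            using am l(3) y'(3) by (simp add: dvd_add)
          ultimately have "int p dvd (int u - res p a l - int l)" by (simp only:)
          then show "int p dvd (res p a l - int u - int l) \<or> int p dvd (int u - res p a l - int l)"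
            by blast
        qed
      qed
    qed
  qed
qed

end


theorem corollary4p9:
  fixes p :: nat
  assumes "prime p" and "p \<ge> 7"
  shows "\<exists>S lam. optimal_ext_irr_dom (cycle_V (2 * p)) (cycle_E (2 * p)) S lam"
proof -
  have pr: "prime p" and p7: "7 \<le> p" using assms by auto
  have p2: "2 < p" using p7 by simp
  have ppr: "prime (int p)" using pr by simp
  obtain m0 where Lm0: "Legendre m0 (int p) = -1" using NR_exists[OF pr p2] by blast
  have n2: "\<not> int p dvd 2"
  proof
    assume "int p dvd 2"
    then have "p dvd 2" by (metis of_nat_dvd_iff of_nat_numeral)
    then show False using p7 by (auto dest: dvd_imp_le)
  qed
  have n3: "\<not> int p dvd 3"
  proof
    assume "int p dvd 3"
    then have "p dvd 3" by (metis of_nat_dvd_iff of_nat_numeral)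
    then show False using p7 by (auto dest: dvd_imp_le)
  qed
  obtain m where Lm: "Legendre m (int p) = -1" and nm1: "\<not> int p dvd (m + 1)"
  proof (cases "int p dvd (m0 + 1)")
    case False
    then show ?thesis using that Lm0 by blast
  next
    case True
    have L2: "Legendre 2 (int p) = 1 \<or> Legendre 2 (int p) = -1"
      using Leg_vals[of 2 "int p"] Leg_zero[of 2 "int p"] n2 by auto
    have e1: "Legendre (4 * m0) (int p) = Legendre 4 (int p) * Legendre m0 (int p)"
      using Leg_mult[OF pr p2, where x = 4 and y = m0] .
    have e2: "Legendre (2 * 2) (int p) = Legendre 2 (int p) * Legendre 2 (int p)"
      using Leg_mult[OF pr p2, where x = 2 and y = 2] .
    have "Legendre 4 (int p) = 1" using e2 L2 by auto
    then have L4: "Legendre (4 * m0) (int p) = -1" using e1 Lm0 by simp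
    have "\<not> int p dvd (4 * m0 + 1)"
    proof
      assume "int p dvd (4 * m0 + 1)"
      moreover have "int p dvd (4 * (m0 + 1))" using True by (rule dvd_mult)
      ultimately have "int p dvd (4 * (m0 + 1) - (4 * m0 + 1))" by (intro dvd_diff)
      moreover have "4 * (m0 + 1) - (4 * m0 + 1) = (3::int)" by simp
      ultimately show False using n3 by simp
    qed
    then show ?thesis using that L4 by blast
  qed
  have n1m: "\<not> int p dvd (1 - m)"
  proof
    assume "int p dvd (1 - m)"
    then have "Legendre m (int p) = Legendre 1 (int p)" using Leg_cong[of "int p" m 1]
      by (simp add: dvd_diff_commute)
    moreover have "Legendre 1 (int p) = 1"
    proof -
      have "QuadRes (int p) 1" unfolding QuadRes_def by (auto intro: exI[of _ 1])
      moreover have "\<not> [1 = 0] (mod int p)" using p7 by (simp add: cong_0_iff)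
      ultimately show ?thesis by (simp add: Legendre_def)
    qed
    ultimately show False using Lm by simp
  qed
  have "coprime (1 - m) (int p)" using prime_imp_coprime_int[OF ppr n1m] by (simp add: ac_simps)
  then obtain x where x: "[(1 - m) * x = 1] (mod int p)" using cong_solve_coprime_int by blast
  have dx: "int p dvd ((1 - m) * x - 1)" using x by (simp add: cong_iff_dvd_diff)
  define a where "a = 2 * x"
  have am: "int p dvd (a - 2 - m * a)"
  proof -
    have eq: "a - 2 - m * a = 2 * ((1 - m) * x - 1)" unfolding a_def by (simp add: algebra_simps)
    have "int p dvd (2 * ((1 - m) * x - 1))" using dx by (rule dvd_mult)
    then show ?thesis unfolding eq .
  qed
  have La: "\<not> int p dvd a"
  proof
    assume "int p dvd a"
    then have "int p dvd ((1 - m) * a)" by (rule dvd_mult)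
    then have "int p dvd ((1 - m) * a - (a - 2 - m * a))" using am by (rule dvd_diff)
    moreover have "(1 - m) * a - (a - 2 - m * a) = 2" by (simp add: algebra_simps)
    ultimately show False using n2 by simp
  qed
  have La1: "\<not> int p dvd (a - 1)"
  proof
    assume "int p dvd (a - 1)"
    then have "int p dvd ((1 - m) * (a - 1))" by (rule dvd_mult)
    then have "int p dvd ((1 - m) * (a - 1) - (a - 2 - m * a))" using am by (rule dvd_diff)
    moreover have "(1 - m) * (a - 1) - (a - 2 - m * a) = m + 1" by (simp add: algebra_simps)
    ultimately show False using nm1 by simp
  qed
  note ctx = pr p7 La La1 Lm am
  have inj: "inj_on (cen p a) {0..p}" using cen_inj[OF ctx] .
  have odd: "odd p" using oddp[OF ctx] .
  define S where "S = cen p a ` {0..p}"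
  define lam where "lam = inv_into {0..p} (cen p a)"
  have lamc: "\<And>l. l \<le> p \<Longrightarrow> lam (cen p a l) = l"
    unfolding lam_def using inv_into_f_f[OF inj] by simp
  have ext: "ext_irr_dom (cycle_V (2 * p)) (cycle_E (2 * p)) (card S) S lam"
    unfolding ext_irr_dom_def
  proof (intro conjI)
    show "S \<subseteq> cycle_V (2 * p)" unfolding S_def cycle_V_def using cen_props[OF odd] by auto
    show "finite S" unfolding S_def by simp
    show "card S = card S" ..
    show "inj_on lam S" unfolding lam_def S_def by (rule inj_on_inv_into) simp
    show "\<exists>v\<in>S. lam v = 0" unfolding S_def using lamc[of 0] by force
    show "\<forall>u\<in>cycle_V (2 * p). \<exists>v\<in>S. dominates (cycle_E (2 * p)) v (lam v) u"
    proof
      fix u assume "u \<in> cycle_V (2 * p)"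
      then have u: "u < 2 * p" unfolding cycle_V_def by simp
      obtain l where l: "l \<le> p" "cD (2 * p) l u (cen p a l)" using cover[OF ctx u] by blast
      have "gdist (cycle_E (2 * p)) u (cen p a l) = l"
        using gdist_cyc[OF u _ _ l(2)] cen_props[OF odd] l(1) by simp
      then have "dominates (cycle_E (2 * p)) (cen p a l) (lam (cen p a l)) u"
        unfolding dominates_def using lamc l(1) by simp
      moreover have "cen p a l \<in> S" unfolding S_def using l(1) by simp
      ultimately show "\<exists>v\<in>S. dominates (cycle_E (2 * p)) v (lam v) u" by blast
    qed
  qed
  then have "\<exists>k S lam. ext_irr_dom (cycle_V (2 * p)) (cycle_E (2 * p)) k S lam" by blast
  then have "\<exists>S lam. ext_irr_dom (cycle_V (2 * p)) (cycle_E (2 * p))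
      (LEAST k. \<exists>S lam. ext_irr_dom (cycle_V (2 * p)) (cycle_E (2 * p)) k S lam) S lam"
    by (rule LeastI_ex)
  then show ?thesis unfolding optimal_ext_irr_dom_def gamma_e_def .
qed

end
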